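(* Let $r\ge 1$ and $g\ge 3$ be integers and let $n[1,r;g]$ denote the order of a $[1,r;g]$-mixed cage. Then $$n[1,r;g]\ \ge\ \begin{cases} 2\left(1+\sum_{i=1}^{(g-3)/2} n_0(r,2i+1)\right)+n_0(r,g) & \text{if } g \text{ is odd},\\[1mm] 2\left(1+\sum_{i=1}^{(g-2)/2} n_0(r,2i+1)\right) & \text{if } g \text{ is even},\end{cases}$$ where $n_0(r,g)=1+r+r(r-1)+\cdots+r(r-1)^{(g-3)/2}$ for odd $g$ and $n_0(r,g)=2\left(1+(r-1)+\cdots+(r-1)^{g/2-1}\right)$ for even $g$.
   Context: A mixed graph is a finite graph that may contain both edges and arcs. A $[z,r;g]$-mixed graph is a mixed graph in which every vertex is the tail of exactly $z$ arcs, the head of exactly $z$ arcs, and is incident with exactly $r$ edges, and whose girth is $g$. Walks traverse edges in either direction and arcs only in their direction; a cycle is a closed walk with no repeated vertices (other than start = end) and no repeated edge or arc; the girth is the length of a shortest cycle. A $[z,r;g]$-mixed cage is a $[z,r;g]$-mixed graph of minimum order. *)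

theory Defs
  imports Main
begin

definition mixed_graph :: "'a set \<Rightarrow> 'a set set \<Rightarrow> ('a \<times> 'a) set \<Rightarrow> bool" where
  "mixed_graph V E A \<longleftrightarrow> finite V \<and>
     (\<forall>e\<in>E. e \<subseteq> V \<and> card e = 2) \<and>
     (\<forall>(u,v)\<in>A. u \<in> V \<and> v \<in> V \<and> u \<noteq> v)"

definition mstep :: "'a set set \<Rightarrow> ('a \<times> 'a) set \<Rightarrow> ('a set + ('a \<times> 'a)) \<Rightarrow> 'a \<Rightarrow> 'a \<Rightarrow> bool" where
  "mstep E A x u v = (case x of Inl e \<Rightarrow> e \<in> E \<and> e = {u, v} | Inr a \<Rightarrow> a \<in> A \<and> a = (u, v))"

definition mixed_cycle :: "'a set \<Rightarrow> 'a set set \<Rightarrow> ('a \<times> 'a) set \<Rightarrow> 'a list \<Rightarrow> ('a set + ('a \<times> 'a)) list \<Rightarrow> bool" where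
  "mixed_cycle V E A vs xs \<longleftrightarrow> length vs \<ge> 1 \<and> length xs = length vs \<and>
     set vs \<subseteq> V \<and> distinct vs \<and> distinct xs \<and>
     (\<forall>i < length vs. mstep E A (xs ! i) (vs ! i) (vs ! ((i + 1) mod length vs)))"

definition mixed_girth :: "'a set \<Rightarrow> 'a set set \<Rightarrow> ('a \<times> 'a) set \<Rightarrow> nat \<Rightarrow> bool" where
  "mixed_girth V E A g \<longleftrightarrow>
     (\<exists>vs xs. mixed_cycle V E A vs xs \<and> length vs = g) \<and>
     (\<forall>vs xs. mixed_cycle V E A vs xs \<longrightarrow> g \<le> length vs)"

definition zrg_mixed_graph :: "nat \<Rightarrow> nat \<Rightarrow> nat \<Rightarrow> 'a set \<Rightarrow> 'a set set \<Rightarrow> ('a \<times> 'a) set \<Rightarrow> bool" where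
  "zrg_mixed_graph z r g V E A \<longleftrightarrow> mixed_graph V E A \<and>
     (\<forall>v\<in>V. card {u. (v, u) \<in> A} = z \<and> card {u. (u, v) \<in> A} = z \<and>
             card {e\<in>E. v \<in> e} = r) \<and>
     mixed_girth V E A g"

definition n0 :: "nat \<Rightarrow> nat \<Rightarrow> nat" where
  "n0 r g = (if odd g then 1 + (\<Sum>i=0..(g - 3) div 2. r * (r - 1) ^ i)
             else 2 * (\<Sum>i=0..g div 2 - 1. (r - 1) ^ i))"

definition mixed_bound :: "nat \<Rightarrow> nat \<Rightarrow> nat" where
  "mixed_bound r g = (if odd g then 2 * (1 + (\<Sum>i=1..(g - 3) div 2. n0 r (2 * i + 1))) + n0 r g
                      else 2 * (1 + (\<Sum>i=1..(g - 2) div 2. n0 r (2 * i + 1))))"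

end

theory Submission
  imports Defs
begin


inductive walk :: "'a set set \<Rightarrow> ('a \<times> 'a) set \<Rightarrow> 'a \<Rightarrow> (('a set + ('a \<times> 'a)) \<times> 'a) list \<Rightarrow> 'a \<Rightarrow> bool"
  for E A where
  wnil: "walk E A u [] u"
| wcons: "mstep E A x u w \<Longrightarrow> walk E A w ps v \<Longrightarrow> walk E A u ((x,w)#ps) v"

inductive_cases walk_NilE: "walk E A u [] v"
inductive_cases walk_ConsE: "walk E A u (p#ps) v"

lemma walk_append: "walk E A u ps w \<Longrightarrow> walk E A w qs v \<Longrightarrow> walk E A u (ps@qs) v"
  by (induction rule: walk.induct) (auto intro: walk.intros)

lemma walk_split: "walk E A u (ps@qs) v \<Longrightarrow> \<exists>w. walk E A u ps w \<and> walk E A w qs v"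
proof (induction ps arbitrary: u)
  case Nil then show ?case by (auto intro: walk.intros)
next
  case (Cons p ps)
  obtain x w where p: "p = (x,w)" by force
  from Cons.prems p have "mstep E A x u w" "walk E A w (ps@qs) v" by (auto elim: walk_ConsE)
  with Cons.IH p show ?case by (auto intro: walk.intros)
qed

lemma walk_snoc: "walk E A u ps w \<Longrightarrow> mstep E A x w v \<Longrightarrow> walk E A u (ps@[(x,v)]) v"
  by (rule walk_append) (auto intro: walk.intros)

lemma step_in: "walk E A u ps v \<Longrightarrow> (x,b) \<in> set ps \<Longrightarrow> \<exists>a \<in> set (u # map snd ps). mstep E A x a b"
  by (induction rule: walk.induct) auto

lemma distinct_elems: "walk E A u ps v \<Longrightarrow> distinct (u # map snd ps) \<Longrightarrow> distinct (map fst ps)"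
proof (induction rule: walk.induct)
  case (wnil u) then show ?case by simp
next
  case (wcons x u w ps v)
  have "x \<notin> fst ` set ps"
  proof
    assume "x \<in> fst ` set ps"
    then obtain b where xb: "(x,b) \<in> set ps" by force
    obtain a where a: "a \<in> set (w # map snd ps)" "mstep E A x a b" using step_in[OF wcons.hyps(2) xb] by blast
    have b: "b \<in> set (w # map snd ps)" using xb by force
    have u: "u \<notin> set (w # map snd ps)" using wcons.prems by simp
    show False using wcons.hyps(1) a b u
      by (cases x) (auto simp: mstep_def doubleton_eq_iff)
  qed
  then show ?case using wcons by simp
qed

lemma walk_nth: "walk E A u ps v \<Longrightarrow> i < length ps \<Longrightarrow>
   mstep E A (fst (ps!i)) ((u # map snd ps)!i) ((u # map snd ps)! Suc i)"
proof (induction arbitrary: i rule: walk.induct)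
  case (wnil u) then show ?case by simp
next
  case (wcons x u w ps v)
  then show ?case by (cases i) auto
qed

lemma walk_last: "walk E A u ps v \<Longrightarrow> last (u # map snd ps) = v"
  by (induction rule: walk.induct) (auto elim: walk_NilE)

lemma mstep_V: "mixed_graph V E A \<Longrightarrow> mstep E A x a b \<Longrightarrow> b \<in> V"
  by (cases x) (auto simp: mstep_def mixed_graph_def)

lemma walk_V0: "walk E A u ps v \<Longrightarrow> mixed_graph V E A \<Longrightarrow> u \<in> V \<Longrightarrow> set (u # map snd ps) \<subseteq> V \<and> v \<in> V"
  by (induction rule: walk.induct) (auto dest: mstep_V)

lemma walk_V: "mixed_graph V E A \<Longrightarrow> walk E A u ps v \<Longrightarrow> u \<in> V \<Longrightarrow> set (u # map snd ps) \<subseteq> V \<and> v \<in> V"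
  using walk_V0 by metis

lemma walk_suffix: "walk E A w ps v \<Longrightarrow> y \<in> set (w # map snd ps) \<Longrightarrow>
   \<exists>ps2. walk E A y ps2 v \<and> length ps2 \<le> length ps \<and> set ps2 \<subseteq> set ps"
proof (induction rule: walk.induct)
  case (wnil u) then show ?case by (auto intro: walk.intros)
next
  case (wcons x u w ps v)
  show ?case
  proof (cases "y = u")
    case True then show ?thesis using wcons.hyps by (auto intro: walk.intros)
  next
    case False
    then have "y \<in> set (w # map snd ps)" using wcons.prems by simp
    then obtain ps2 where "walk E A y ps2 v" "length ps2 \<le> length ps" "set ps2 \<subseteq> set ps"
      using wcons.IH by blast
    then show ?thesis by (intro exI[of _ ps2]) auto
  qed
qed

lemma walk_shortcut: "walk E A u ps v \<Longrightarrow> \<not> distinct (u # map snd ps) \<Longrightarrow>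
   \<exists>ps'. walk E A u ps' v \<and> length ps' < length ps \<and> set ps' \<subseteq> set ps"
proof (induction rule: walk.induct)
  case (wnil u) then show ?case by simp
next
  case (wcons x u w ps v)
  show ?case
  proof (cases "distinct (w # map snd ps)")
    case True
    then have "u \<in> set (w # map snd ps)" using wcons.prems by simp
    then obtain ps2 where "walk E A u ps2 v" "length ps2 \<le> length ps" "set ps2 \<subseteq> set ps"
      using walk_suffix[OF wcons.hyps(2)] by blast
    then show ?thesis by (intro exI[of _ ps2]) auto
  next
    case False
    then obtain ps' where "walk E A w ps' v" "length ps' < length ps" "set ps' \<subseteq> set ps"
      using wcons.IH by blast
    then show ?thesis using wcons.hyps(1) by (intro exI[of _ "(x,w)#ps'"]) (auto intro: walk.intros)
  qed
qed

lemma walk_to_cycle: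
  assumes mg: "mixed_graph V E A" and gir: "\<forall>vs xs. mixed_cycle V E A vs xs \<longrightarrow> g \<le> length vs"
    and vV: "v \<in> V"
  shows "walk E A v ps u \<Longrightarrow> mstep E A e u v \<Longrightarrow> u \<noteq> v \<Longrightarrow> (isl e \<longrightarrow> e \<notin> fst ` set ps) \<Longrightarrow> g \<le> length ps + 1"
proof (induction "length ps" arbitrary: ps rule: less_induct)
  case (less ps)
  show ?case
  proof (cases "distinct (v # map snd ps)")
    case False
    then obtain ps' where ps': "walk E A v ps' u" "length ps' < length ps" "set ps' \<subseteq> set ps"
      using walk_shortcut[OF less.prems(1) False] by blast
    have "isl e \<longrightarrow> e \<notin> fst ` set ps'" using less.prems(4) ps'(3) by auto
    then have "g \<le> length ps' + 1" using less.hyps[OF ps'(2) ps'(1) less.prems(2) less.prems(3)] by blast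
    then show ?thesis using ps'(2) by simp
  next
    case True
    have ne: "e \<notin> fst ` set ps"
    proof
      assume ein: "e \<in> fst ` set ps"
      then obtain b where eb: "(e,b) \<in> set ps" by force
      obtain a where a: "mstep E A e a b" using step_in[OF less.prems(1) eb] by blast
      have "\<not> isl e" using less.prems(4) ein by blast
      then obtain p where ep: "e = Inr p" by (cases e) auto
      then have "b = v" using a less.prems(2) by (auto simp: mstep_def)
      then show False using eb True by force
    qed
    let ?vs = "v # map snd ps" and ?xs = "map fst ps @ [e]"
    have dx: "distinct (map fst ps)" using distinct_elems[OF less.prems(1) True] .
    have sV: "set ?vs \<subseteq> V" using walk_V[OF mg less.prems(1) vV] by blast
    have "last ?vs = ?vs ! (length ?vs - 1)" by (rule last_conv_nth) simp
    then have lst: "?vs ! length ps = u" using walk_last[OF less.prems(1)] by simp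
    have steps: "\<forall>i < length ?vs. mstep E A (?xs ! i) (?vs ! i) (?vs ! ((i + 1) mod length ?vs))"
    proof (intro allI impI)
      fix i assume i: "i < length ?vs"
      show "mstep E A (?xs ! i) (?vs ! i) (?vs ! ((i + 1) mod length ?vs))"
      proof (cases "i < length ps")
        case True
        then show ?thesis using walk_nth[OF less.prems(1) True] by (simp add: nth_append)
      next
        case False
        then have "i = length ps" using i by simp
        then show ?thesis using lst less.prems(2) by (simp add: nth_append)
      qed
    qed
    have "distinct ?xs" using dx ne by auto
    then have "mixed_cycle V E A ?vs ?xs"
      unfolding mixed_cycle_def using True sV steps by simp
    from gir[rule_format, OF this] show ?thesis by simp
  qed
qed



definition reach :: "'a set set \<Rightarrow> ('a \<times> 'a) set \<Rightarrow> 'a \<Rightarrow> 'a \<Rightarrow> nat \<Rightarrow> bool" where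
  "reach E A x y n \<longleftrightarrow> (\<exists>ps. walk E A x ps y \<and> length ps = n \<and> (\<forall>p\<in>set ps. isl (fst p)))"

definition nbr :: "'a set set \<Rightarrow> 'a \<Rightarrow> 'a set" where
  "nbr E y = {w. {y,w} \<in> E}"

definition sph where "sph E A x i = {y. reach E A x y i \<and> (\<forall>k<i. \<not> reach E A x y k)}"
definition ball where "ball E A x \<rho> = {y. \<exists>k\<le>\<rho>. reach E A x y k}"

lemma mstep_Inl: "mstep E A (Inl e) a b \<longleftrightarrow> e \<in> E \<and> e = {a,b}"
  by (simp add: mstep_def)

lemma walk_rev: "walk E A u ps v \<Longrightarrow> \<forall>p\<in>set ps. isl (fst p) \<Longrightarrow>
  \<exists>qs. walk E A v qs u \<and> length qs = length ps \<and> fst ` set qs = fst ` set ps"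
proof (induction rule: walk.induct)
  case (wnil u) then show ?case by (auto intro: walk.intros)
next
  case (wcons x u w ps v)
  obtain qs where qs: "walk E A v qs w" "length qs = length ps" "fst ` set qs = fst ` set ps"
    using wcons.IH wcons.prems by auto
  obtain e where xe: "x = Inl e" using wcons.prems by (cases x) auto
  have "mstep E A x w u" using wcons.hyps(1) xe by (auto simp: mstep_Inl insert_commute)
  from walk_snoc[OF qs(1) this] have "walk E A v (qs @ [(x,u)]) u" .
  then show ?case using qs by (intro exI[of _ "qs @ [(x,u)]"]) auto
qed

lemma reach_0: "reach E A x y 0 \<longleftrightarrow> y = x"
  by (auto simp: reach_def intro: walk.intros elim: walk_NilE)

lemma reach_Suc: "reach E A x y (Suc n) \<longleftrightarrow> (\<exists>w. reach E A x w n \<and> {w,y} \<in> E)"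
proof
  assume "reach E A x y (Suc n)"
  then obtain ps where ps: "walk E A x ps y" "length ps = Suc n" "\<forall>p\<in>set ps. isl (fst p)"
    unfolding reach_def by blast
  then obtain p qs where pq: "ps = qs @ [p]" "length qs = n" using length_Suc_conv_rev by metis
  obtain w where w: "walk E A x qs w" "walk E A w [p] y" using walk_split ps(1) pq(1) by metis
  obtain z b where p: "p = (z,b)" by force
  from w(2) p have "mstep E A z w b" "b = y" by (auto elim: walk_ConsE walk_NilE)
  moreover obtain e where "z = Inl e" using ps(3) pq p by (cases z) auto
  ultimately have "{w,y} \<in> E" by (auto simp: mstep_Inl)
  moreover have "reach E A x w n" unfolding reach_def using w(1) pq ps(3) by auto
  ultimately show "\<exists>w. reach E A x w n \<and> {w,y} \<in> E" by blast
next
  assume "\<exists>w. reach E A x w n \<and> {w,y} \<in> E"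
  then obtain w ps where "{w,y} \<in> E" "walk E A x ps w" "length ps = n" "\<forall>p\<in>set ps. isl (fst p)"
    unfolding reach_def by blast
  moreover have "mstep E A (Inl {w,y}) w y" using \<open>{w,y} \<in> E\<close> by (simp add: mstep_Inl)
  ultimately show "reach E A x y (Suc n)" unfolding reach_def
    by (intro exI[of _ "ps @ [(Inl {w,y}, y)]"]) (auto intro: walk_snoc)
qed

lemma reach_V: "mixed_graph V E A \<Longrightarrow> reach E A x y n \<Longrightarrow> x \<in> V \<Longrightarrow> y \<in> V"
  unfolding reach_def using walk_V by metis

lemma walk_pos: "walk E A x ps z \<Longrightarrow> \<forall>p\<in>set ps. isl (fst p) \<Longrightarrow> y \<in> set (x # map snd ps) \<Longrightarrow>
   y = z \<or> (\<exists>k<length ps. reach E A x y k)"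
proof (induction rule: walk.induct)
  case (wnil u) then show ?case by simp
next
  case (wcons a u w ps v)
  show ?case
  proof (cases "y = u")
    case True
    then have "reach E A u y 0" by (simp add: reach_0)
    then show ?thesis by auto
  next
    case False
    then have "y \<in> set (w # map snd ps)" using wcons.prems by simp
    then have "y = v \<or> (\<exists>k<length ps. reach E A w y k)" using wcons.IH wcons.prems by simp
    then show ?thesis
    proof
      assume "\<exists>k<length ps. reach E A w y k"
      then obtain k qs where k: "k < length ps" "walk E A w qs y" "length qs = k" "\<forall>p\<in>set qs. isl (fst p)"
        unfolding reach_def by blast
      have "walk E A u ((a,w)#qs) y" using wcons.hyps(1) k(2) by (rule walk.wcons)
      then have "reach E A u y (Suc k)" unfolding reach_def using k(3,4) wcons.prems(1)
        by (intro exI[of _ "(a,w)#qs"]) auto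
      then show ?thesis using k(1) by auto
    qed simp
  qed
qed

lemma elem_vertex: "walk E A a ps b \<Longrightarrow> Inl e \<in> fst ` set ps \<Longrightarrow> y \<in> e \<Longrightarrow> y \<in> set (a # map snd ps)"
proof -
  assume w: "walk E A a ps b" and "Inl e \<in> fst ` set ps" and y: "y \<in> e"
  then obtain c where c: "(Inl e, c) \<in> set ps" by force
  obtain a' where "a' \<in> set (a # map snd ps)" "mstep E A (Inl e) a' c" using step_in[OF w c] by blast
  moreover have "c \<in> set (a # map snd ps)" using c by force
  ultimately show ?thesis using y by (auto simp: mstep_Inl)
qed

lemma edge_ne: "mixed_graph V E A \<Longrightarrow> {a,b} \<in> E \<Longrightarrow> a \<noteq> b"
  unfolding mixed_graph_def by force

lemma twoNbr:
  assumes mg: "mixed_graph V E A" and gir: "\<forall>vs xs. mixed_cycle V E A vs xs \<longrightarrow> g \<le> length vs"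
    and ny: "\<forall>k<m. \<not> reach E A x y k" and e1: "{y,w1} \<in> E" and e2: "{y,w2} \<in> E" and ww: "w1 \<noteq> w2"
    and r1: "reach E A x w1 d1" and r2: "reach E A x w2 d2" and d1: "d1 \<le> m" and d2: "d2 \<le> m"
  shows "g \<le> d1 + d2 + 2"
proof -
  obtain ps1 where p1: "walk E A x ps1 w1" "length ps1 = d1" "\<forall>p\<in>set ps1. isl (fst p)"
    using r1 unfolding reach_def by blast
  obtain ps2 where p2: "walk E A x ps2 w2" "length ps2 = d2" "\<forall>p\<in>set ps2. isl (fst p)"
    using r2 unfolding reach_def by blast
  obtain qs2 where q2: "walk E A w2 qs2 x" "length qs2 = d2" "fst ` set qs2 = fst ` set ps2"
    using walk_rev[OF p2(1) p2(3)] p2(2) by auto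
  have yw1: "y \<noteq> w1" and yw2: "y \<noteq> w2" using edge_ne[OF mg e1] edge_ne[OF mg e2] by auto
  have yV: "y \<in> V" using mg e1 unfolding mixed_graph_def by blast
  have s: "mstep E A (Inl {y,w2}) y w2" using e2 by (simp add: mstep_Inl)
  have W: "walk E A y ((Inl {y,w2}, w2) # qs2 @ ps1) w1"
    by (rule walk.wcons[OF s walk_append[OF q2(1) p1(1)]])
  have me: "mstep E A (Inl {y,w1}) w1 y" using e1 by (simp add: mstep_Inl insert_commute)
  have n1: "Inl {y,w1} \<notin> fst ` set ps1"
  proof
    assume "Inl {y,w1} \<in> fst ` set ps1"
    then have "y \<in> set (x # map snd ps1)" using elem_vertex[OF p1(1)] by blast
    then have "y = w1 \<or> (\<exists>k<length ps1. reach E A x y k)" using walk_pos[OF p1(1) p1(3)] by blast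
    then show False using yw1 ny p1(2) d1 by auto
  qed
  have n2: "Inl {y,w1} \<notin> fst ` set ps2"
  proof
    assume "Inl {y,w1} \<in> fst ` set ps2"
    then have "y \<in> set (x # map snd ps2)" using elem_vertex[OF p2(1)] by blast
    then have "y = w2 \<or> (\<exists>k<length ps2. reach E A x y k)" using walk_pos[OF p2(1) p2(3)] by blast
    then show False using yw2 ny p2(2) d2 by auto
  qed
  have n3: "{y,w1} \<noteq> {y,w2}" using ww yw1 by (auto simp: doubleton_eq_iff)
  have "isl (Inl {y,w1}) \<longrightarrow> Inl {y,w1} \<notin> fst ` set ((Inl {y,w2}, w2) # qs2 @ ps1)"
    using n1 n2 n3 q2(3) by auto
  from walk_to_cycle[OF mg gir yV W me yw1[symmetric] this]
  show ?thesis using q2(2) p1(2) by simp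
qed



lemma nbr_card:
  assumes mg: "mixed_graph V E A" and deg: "card {e\<in>E. y \<in> e} = r"
  shows "card (nbr E y) = r"
proof -
  have "bij_betw (\<lambda>w. {y,w}) (nbr E y) {e\<in>E. y \<in> e}"
    unfolding bij_betw_def
  proof
    show "inj_on (\<lambda>w. {y,w}) (nbr E y)" by (auto simp: inj_on_def doubleton_eq_iff)
    show "(\<lambda>w. {y,w}) ` nbr E y = {e\<in>E. y \<in> e}"
    proof
      show "(\<lambda>w. {y,w}) ` nbr E y \<subseteq> {e\<in>E. y \<in> e}" by (auto simp: nbr_def)
      show "{e\<in>E. y \<in> e} \<subseteq> (\<lambda>w. {y,w}) ` nbr E y"
      proof
        fix e assume e: "e \<in> {e\<in>E. y \<in> e}"
        then have "card e = 2" using mg by (auto simp: mixed_graph_def)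
        then obtain a b where ab: "e = {a,b}" by (auto simp: card_2_iff)
        then have ee: "e = {y, (if a = y then b else a)}" using e by auto
        then have "(if a = y then b else a) \<in> nbr E y" using e unfolding nbr_def by auto
        then show "e \<in> (\<lambda>w. {y,w}) ` nbr E y" using ee by blast
      qed
    qed
  qed
  then show ?thesis using deg bij_betw_same_card by metis
qed

definition Mf :: "nat \<Rightarrow> nat \<Rightarrow> nat" where "Mf r \<rho> = 1 + (\<Sum>i<\<rho>. r*(r-1)^i)"

lemma moore:
  assumes mg: "mixed_graph V E A" and gir: "\<forall>vs xs. mixed_cycle V E A vs xs \<longrightarrow> g \<le> length vs"
    and xV: "x \<in> V" and reg: "\<forall>v\<in>V. card (nbr E v) = r"
  shows "2*\<rho>+1 \<le> g \<Longrightarrow> Mf r \<rho> \<le> card (ball E A x \<rho>) \<and> (\<rho> \<ge> 1 \<longrightarrow> r*(r-1)^(\<rho>-1) \<le> card (sph E A x \<rho>))"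
proof (induction \<rho>)
  case 0
  have "ball E A x 0 = {x}" by (auto simp: ball_def reach_0)
  then show ?case by (simp add: Mf_def)
next
  case (Suc \<rho>)
  then have IH: "Mf r \<rho> \<le> card (ball E A x \<rho>)" by auto
  have finV: "finite V" using mg by (simp add: mixed_graph_def)
  have bsub: "\<And>t. ball E A x t \<subseteq> V" unfolding ball_def using reach_V[OF mg _ xV] by blast
  have ssub: "\<And>t. sph E A x t \<subseteq> V" unfolding sph_def using reach_V[OF mg _ xV] by blast
  have nsub: "\<And>y. nbr E y \<subseteq> V" unfolding nbr_def using mg unfolding mixed_graph_def by blast
  have split: "ball E A x (Suc \<rho>) = ball E A x \<rho> \<union> sph E A x (Suc \<rho>)"
  proof
    show "ball E A x (Suc \<rho>) \<subseteq> ball E A x \<rho> \<union> sph E A x (Suc \<rho>)"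
    proof
      fix y assume "y \<in> ball E A x (Suc \<rho>)"
      then obtain k where k: "k \<le> Suc \<rho>" "reach E A x y k" unfolding ball_def by blast
      show "y \<in> ball E A x \<rho> \<union> sph E A x (Suc \<rho>)"
      proof (cases "\<exists>k'\<le>\<rho>. reach E A x y k'")
        case True then show ?thesis unfolding ball_def by blast
      next
        case False
        then have "k = Suc \<rho>" using k by (metis le_SucE)
        then show ?thesis using False k unfolding sph_def by auto
      qed
    qed
    show "ball E A x \<rho> \<union> sph E A x (Suc \<rho>) \<subseteq> ball E A x (Suc \<rho>)"
      unfolding ball_def sph_def using le_SucI by blast
  qed
  have disj: "ball E A x \<rho> \<inter> sph E A x (Suc \<rho>) = {}"
    unfolding ball_def sph_def by auto
  have sphb: "r*(r-1)^\<rho> \<le> card (sph E A x (Suc \<rho>))"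
  proof (cases "\<rho> = 0")
    case True
    have "sph E A x (Suc 0) = nbr E x"
      unfolding sph_def nbr_def using edge_ne[OF mg] by (auto simp: reach_Suc reach_0)
    then show ?thesis using True reg xV by simp
  next
    case False
    let ?S = "sph E A x \<rho>" and ?T = "sph E A x (Suc \<rho>)"
    define N where "N y = nbr E y \<inter> ?T" for y
    have Nsub: "(\<Union>y\<in>?S. N y) \<subseteq> ?T" unfolding N_def by blast
    have Ncard: "r - 1 \<le> card (N y)" if yS: "y \<in> ?S" for y
    proof -
      define B where "B = {w\<in>nbr E y. \<exists>k\<le>\<rho>. reach E A x w k}"
      have "B \<subseteq> V" using nsub unfolding B_def by blast
      then have finB: "finite B" using finV by (rule finite_subset)
      have ny: "\<forall>k<\<rho>. \<not> reach E A x y k" and ry: "reach E A x y \<rho>" using yS unfolding sph_def by auto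
      have "\<forall>w1\<in>B. \<forall>w2\<in>B. w1 = w2"
      proof (intro ballI, rule ccontr)
        fix w1 w2 assume w1: "w1 \<in> B" and w2: "w2 \<in> B" and ne: "w1 \<noteq> w2"
        obtain d1 where d1: "d1 \<le> \<rho>" "reach E A x w1 d1" using w1 unfolding B_def by blast
        obtain d2 where d2: "d2 \<le> \<rho>" "reach E A x w2 d2" using w2 unfolding B_def by blast
        have "{y,w1} \<in> E" "{y,w2} \<in> E" using w1 w2 unfolding B_def nbr_def by auto
        from twoNbr[OF mg gir ny this ne d1(2) d2(2) d1(1) d2(1)]
        have "g \<le> d1 + d2 + 2" .
        then show False using Suc.prems d1(1) d2(1) by simp
      qed
      then have cB: "card B \<le> 1" using card_le_Suc0_iff_eq[OF finB] by simp
      have "nbr E y - B \<subseteq> N y"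
      proof
        fix w assume w: "w \<in> nbr E y - B"
        then have "{y,w} \<in> E" and nw: "\<forall>k\<le>\<rho>. \<not> reach E A x w k" unfolding B_def nbr_def by auto
        then have "reach E A x w (Suc \<rho>)" using ry by (auto simp: reach_Suc)
        moreover have "\<forall>k<Suc \<rho>. \<not> reach E A x w k" using nw by auto
        ultimately show "w \<in> N y" using w unfolding N_def sph_def by auto
      qed
      then have "card (nbr E y - B) \<le> card (N y)"
        by (rule card_mono[rotated]) (use finV ssub in \<open>auto simp: N_def intro: finite_subset\<close>)
      moreover have "card (nbr E y) - card B \<le> card (nbr E y - B)" by (rule diff_card_le_card_Diff[OF finB])
      moreover have "card (nbr E y) = r" using reg ssub yS by blast
      ultimately show ?thesis using cB by linarith
    qed
    have Ndisj: "\<forall>y1\<in>?S. \<forall>y2\<in>?S. y1 \<noteq> y2 \<longrightarrow> N y1 \<inter> N y2 = {}"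
    proof (intro ballI impI)
      fix y1 y2 assume y1: "y1 \<in> ?S" and y2: "y2 \<in> ?S" and ne: "y1 \<noteq> y2"
      show "N y1 \<inter> N y2 = {}"
      proof (rule ccontr)
        assume "N y1 \<inter> N y2 \<noteq> {}"
        then obtain z where z: "z \<in> N y1" "z \<in> N y2" by blast
        then have "{z,y1} \<in> E" "{z,y2} \<in> E" unfolding N_def nbr_def by (auto simp: insert_commute)
        moreover have "\<forall>k<\<rho>. \<not> reach E A x z k" using z unfolding N_def sph_def by auto
        moreover have "reach E A x y1 \<rho>" "reach E A x y2 \<rho>" using y1 y2 unfolding sph_def by auto
        ultimately have "g \<le> \<rho> + \<rho> + 2" using twoNbr[OF mg gir, of \<rho> x z y1 y2 \<rho> \<rho>] ne by simp
        then show False using Suc.prems by simp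
      qed
    qed
    have finS: "finite ?S" using finV ssub by (rule finite_subset[rotated])
    have "card (\<Union>y\<in>?S. N y) = (\<Sum>y\<in>?S. card (N y))"
      by (rule card_UN_disjoint[OF finS _ Ndisj]) (use finV ssub in \<open>auto simp: N_def intro: finite_subset\<close>)
    also have "\<dots> \<ge> card ?S * (r - 1)" using sum_bounded_below[of ?S "r-1" "\<lambda>y. card (N y)"] Ncard by simp
    finally have "card ?S * (r-1) \<le> card ?T"
      using card_mono[OF finite_subset[OF ssub finV] Nsub] by linarith
    moreover have "r*(r-1)^(\<rho>-1) \<le> card ?S" using Suc False by auto
    ultimately have "r*(r-1)^(\<rho>-1) * (r-1) \<le> card ?T"
      by (meson le_trans mult_le_mono1)
    moreover have "r*(r-1)^(\<rho>-1) * (r-1) = r*(r-1)^\<rho>" using False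
      by (metis (no_types) Suc_pred' bot_nat_0.not_eq_extremum mult.assoc power_Suc2)
    ultimately show ?thesis by metis
  qed
  have "card (ball E A x (Suc \<rho>)) = card (ball E A x \<rho>) + card (sph E A x (Suc \<rho>))"
    unfolding split by (rule card_Un_disjoint[OF finite_subset[OF bsub finV] finite_subset[OF ssub finV] disj])
  moreover have "Mf r (Suc \<rho>) = Mf r \<rho> + r*(r-1)^\<rho>" by (simp add: Mf_def)
  ultimately show ?case using IH sphb by simp
qed



lemma sum_min_step: "(\<Sum>j<Suc (Suc n). f (min j (Suc n - j))) = 2 * f 0 + (\<Sum>j<n. f (Suc (min j (n - 1 - j))))"
  for f :: "nat \<Rightarrow> nat"
proof -
  have "(\<Sum>j<Suc (Suc n). f (min j (Suc n - j))) = f 0 + (\<Sum>j<Suc n. f (min (Suc j) (n - j)))"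
    by (subst sum.lessThan_Suc_shift) simp
  also have "(\<Sum>j<Suc n. f (min (Suc j) (n - j))) = (\<Sum>j<n. f (min (Suc j) (n - j))) + f 0" by simp
  also have "(\<Sum>j<n. f (min (Suc j) (n - j))) = (\<Sum>j<n. f (Suc (min j (n - 1 - j))))"
    by (rule sum.cong) (auto simp: min_def Suc_diff_Suc)
  finally show ?thesis by simp
qed

lemma sum_odd: "(\<Sum>j<Suc (2*k). f (min j (2*k - j))) = 2*(\<Sum>j<k. f j) + f k"
  for f :: "nat \<Rightarrow> nat"
proof (induction k arbitrary: f)
  case 0 then show ?case by simp
next
  case (Suc k)
  have "(\<Sum>j<Suc (2*Suc k). f (min j (2*Suc k - j))) = (\<Sum>j<Suc (Suc (Suc (2*k))). f (min j (Suc (Suc (2*k)) - j)))"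
    by simp
  also have "\<dots> = 2*f 0 + (\<Sum>j<Suc (2*k). f (Suc (min j (Suc (2*k) - 1 - j))))"
    by (rule sum_min_step)
  also have "\<dots> = 2*f 0 + (2*(\<Sum>j<k. f (Suc j)) + f (Suc k))"
    using Suc.IH[of "\<lambda>j. f (Suc j)"] by simp
  also have "\<dots> = 2*(\<Sum>j<Suc k. f j) + f (Suc k)" by (simp only: sum.lessThan_Suc_shift) simp
  finally show ?case .
qed

lemma sum_even: "(\<Sum>j<Suc (Suc (2*k)). f (min j (Suc (2*k) - j))) = 2*(\<Sum>j<Suc k. f j)"
  for f :: "nat \<Rightarrow> nat"
proof (induction k arbitrary: f)
  case 0 then show ?case by simp
next
  case (Suc k)
  have "(\<Sum>j<Suc (Suc (2*Suc k)). f (min j (Suc (2*Suc k) - j))) = (\<Sum>j<Suc (Suc (Suc (Suc (2*k)))). f (min j (Suc (Suc (Suc (2*k))) - j)))"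
    by simp
  also have "\<dots> = 2*f 0 + (\<Sum>j<Suc (Suc (2*k)). f (Suc (min j (Suc (Suc (2*k)) - 1 - j))))"
    by (rule sum_min_step)
  also have "\<dots> = 2*f 0 + 2*(\<Sum>j<Suc k. f (Suc j))"
    using Suc.IH[of "\<lambda>j. f (Suc j)"] by simp
  also have "\<dots> = 2*(\<Sum>j<Suc (Suc k). f j)" by (simp only: sum.lessThan_Suc_shift) simp
  finally show ?case .
qed

lemma n0_Mf: "1 \<le> i \<Longrightarrow> n0 r (2*i+1) = Mf r i"
proof -
  assume "1 \<le> i"
  then obtain i' where i: "i = Suc i'" by (cases i) auto
  have "(2 * Suc i' + 1 - 3) div 2 = i'" by simp
  then show ?thesis unfolding i n0_def Mf_def
    by (simp add: atLeast0AtMost lessThan_Suc_atMost[symmetric])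
qed

lemma sum_1_shift: "(\<Sum>i=1..m. h i) = (\<Sum>j<m. h (Suc j))" for h :: "nat \<Rightarrow> nat"
  by (induction m) auto

lemma M0: "Mf r 0 = 1" by (simp add: Mf_def)

lemma bound_eq:
  assumes "g \<ge> 3"
  shows "mixed_bound r g = (\<Sum>j<g. Mf r (min j (g - 1 - j)))"
proof (cases "odd g")
  case True
  then obtain k where k: "g = Suc (2*k)" by (metis oddE Suc_eq_plus1)
  with assms obtain k' where k': "k = Suc k'" by (cases k) auto
  have "(g - 3) div 2 = k'" using k k' by simp
  then have mb: "mixed_bound r g = 2 * (1 + (\<Sum>i=1..k'. n0 r (2 * i + 1))) + n0 r g"
    unfolding mixed_bound_def using True by simp
  have s: "(\<Sum>i=1..k'. n0 r (2 * i + 1)) = (\<Sum>j<k'. Mf r (Suc j))"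
    unfolding sum_1_shift by (rule sum.cong) (auto simp: n0_Mf[of "Suc _", simplified])
  have ng: "n0 r g = Mf r k" using k k' n0_Mf[of k r] by simp
  have "(\<Sum>j<g. Mf r (min j (g - 1 - j))) = 2*(\<Sum>j<k. Mf r j) + Mf r k"
    using sum_odd[of "Mf r" k] k by simp
  also have "\<dots> = 2*(1 + (\<Sum>j<k'. Mf r (Suc j))) + Mf r k"
    unfolding k' by (simp only: sum.lessThan_Suc_shift M0)
  finally show ?thesis using mb s ng by simp
next
  case False
  then obtain k where k: "g = 2*k" by (metis evenE)
  with assms obtain k' where k': "k = Suc k'" by (cases k) auto
  have "(g - 2) div 2 = k'" using k k' by simp
  then have mb: "mixed_bound r g = 2 * (1 + (\<Sum>i=1..k'. n0 r (2 * i + 1)))"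
    unfolding mixed_bound_def using False by simp
  have s: "(\<Sum>i=1..k'. n0 r (2 * i + 1)) = (\<Sum>j<k'. Mf r (Suc j))"
    unfolding sum_1_shift by (rule sum.cong) (auto simp: n0_Mf[of "Suc _", simplified])
  have "(\<Sum>j<g. Mf r (min j (g - 1 - j))) = 2*(\<Sum>j<Suc k'. Mf r j)"
    using sum_even[of "Mf r" k'] k k' by simp
  also have "\<dots> = 2*(1 + (\<Sum>j<k'. Mf r (Suc j)))"
    by (simp only: sum.lessThan_Suc_shift M0)
  finally show ?thesis using mb s by simp
qed



theorem theorem2:
  fixes r g :: nat and V :: "'a set" and E :: "'a set set" and A :: "('a \<times> 'a) set"
  assumes "r \<ge> 1" and "g \<ge> 3"
    and "zrg_mixed_graph 1 r g V E A"
  shows "card V \<ge> mixed_bound r g"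
proof -
  from assms(3) have mg: "mixed_graph V E A"
    and deg: "\<forall>v\<in>V. card {u. (v,u)\<in>A} = 1 \<and> card {u. (u,v)\<in>A} = 1 \<and> card {e\<in>E. v\<in>e} = r"
    and gi: "mixed_girth V E A g" by (auto simp: zrg_mixed_graph_def)
  have gir: "\<forall>vs xs. mixed_cycle V E A vs xs \<longrightarrow> g \<le> length vs" using gi by (simp add: mixed_girth_def)
  have finV: "finite V" using mg by (simp add: mixed_graph_def)
  obtain x0 where x0: "x0 \<in> V"
  proof -
    from gi obtain vs xs where "mixed_cycle V E A vs xs" by (auto simp: mixed_girth_def)
    then have "vs \<noteq> []" "set vs \<subseteq> V" by (auto simp: mixed_cycle_def)
    then show ?thesis using that by (meson hd_in_set subsetD)
  qed
  have reg: "\<forall>v\<in>V. card (nbr E v) = r" using nbr_card[OF mg] deg by blast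
  define nx where "nx v = (SOME u. (v,u) \<in> A)" for v
  have nx: "(v, nx v) \<in> A" if "v \<in> V" for v
  proof -
    have "card {u. (v,u)\<in>A} = 1" using deg that by blast
    then have "{u. (v,u)\<in>A} \<noteq> {}" by force
    then have "\<exists>u. (v,u) \<in> A" by blast
    then show ?thesis unfolding nx_def by (rule someI_ex)
  qed
  have nxV: "nx v \<in> V" if "v \<in> V" for v
    using nx[OF that] mg unfolding mixed_graph_def by blast
  define xs where "xs j = (nx ^^ j) x0" for j
  have xsV: "xs j \<in> V" for j
    by (induction j) (auto simp: xs_def x0 nxV)
  have xarc: "(xs j, xs (Suc j)) \<in> A" for j
    using nx[OF xsV[of j]] by (simp add: xs_def)
  have xne: "xs j \<noteq> xs (Suc j)" for j
    using xarc[of j] mg unfolding mixed_graph_def by blast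
  have chain: "\<exists>ps. walk E A (xs a) ps (xs (a+n)) \<and> length ps = n" for a n
  proof (induction n arbitrary: a)
    case 0 then show ?case by (auto intro: walk.intros)
  next
    case (Suc n)
    obtain ps where "walk E A (xs (Suc a)) ps (xs (Suc a + n))" "length ps = n" using Suc.IH by blast
    moreover have "mstep E A (Inr (xs a, xs (Suc a))) (xs a) (xs (Suc a))"
      using xarc by (simp add: mstep_def)
    ultimately have "walk E A (xs a) ((Inr (xs a, xs (Suc a)), xs (Suc a)) # ps) (xs (a + Suc n))"
      by (auto intro: walk.intros)
    then show ?case using \<open>length ps = n\<close> by (intro exI) auto
  qed
  define \<rho> where "\<rho> j = min j (g - 1 - j)" for j
  define F where "F j = ball E A (xs j) (\<rho> j)" for j
  have FV: "F j \<subseteq> V" for j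
    unfolding F_def ball_def using reach_V[OF mg _ xsV] by blast
  have disj0: "F j \<inter> F l = {}" if jl: "j < l" "l < g" for j l
  proof (rule ccontr)
    assume "F j \<inter> F l \<noteq> {}"
    then obtain z where z: "z \<in> F j" "z \<in> F l" by blast
    obtain dj where dj: "dj \<le> \<rho> j" "reach E A (xs j) z dj" using z(1) unfolding F_def ball_def by blast
    obtain dl where dl: "dl \<le> \<rho> l" "reach E A (xs l) z dl" using z(2) unfolding F_def ball_def by blast
    obtain ps1 where p1: "walk E A (xs (Suc j)) ps1 (xs l)" "length ps1 = l - j - 1"
      using chain[of "Suc j" "l - j - 1"] jl by (auto simp: Suc_diff_Suc)
    obtain ps2 where p2: "walk E A (xs l) ps2 z" "length ps2 = dl" using dl(2) unfolding reach_def by blast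
    obtain ps3 where p3: "walk E A (xs j) ps3 z" "length ps3 = dj" "\<forall>p\<in>set ps3. isl (fst p)"
      using dj(2) unfolding reach_def by blast
    obtain qs3 where q3: "walk E A z qs3 (xs j)" "length qs3 = dj"
      using walk_rev[OF p3(1) p3(3)] p3(2) by auto
    have W: "walk E A (xs (Suc j)) (ps1 @ ps2 @ qs3) (xs j)"
      by (rule walk_append[OF p1(1) walk_append[OF p2(1) q3(1)]])
    have me: "mstep E A (Inr (xs j, xs (Suc j))) (xs j) (xs (Suc j))" using xarc by (simp add: mstep_def)
    have "g \<le> length (ps1 @ ps2 @ qs3) + 1"
      by (rule walk_to_cycle[OF mg gir xsV W me xne]) simp
    moreover have "\<rho> j \<le> j" "\<rho> l \<le> g - 1 - l" unfolding \<rho>_def by auto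
    ultimately show False using p1(2) p2(2) q3(2) dj(1) dl(1) jl by simp
  qed
  have disj: "\<forall>j\<in>{..<g}. \<forall>l\<in>{..<g}. j \<noteq> l \<longrightarrow> F j \<inter> F l = {}"
    using disj0 by (metis Int_commute lessThan_iff nat_neq_iff)
  have "card (\<Union>j\<in>{..<g}. F j) = (\<Sum>j<g. card (F j))"
    by (rule card_UN_disjoint[OF _ _ disj]) (use finV FV in \<open>auto intro: finite_subset\<close>)
  moreover have "card (\<Union>j\<in>{..<g}. F j) \<le> card V"
    by (rule card_mono[OF finV]) (use FV in blast)
  moreover have "Mf r (\<rho> j) \<le> card (F j)" for j
  proof -
    have "2 * \<rho> j + 1 \<le> g" using assms(2) unfolding \<rho>_def by linarith
    then show ?thesis using moore[OF mg gir xsV reg] unfolding F_def by blast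
  qed
  then have "(\<Sum>j<g. Mf r (\<rho> j)) \<le> (\<Sum>j<g. card (F j))" by (rule sum_mono)
  moreover have "mixed_bound r g = (\<Sum>j<g. Mf r (\<rho> j))" unfolding \<rho>_def by (rule bound_eq[OF assms(2)])
  ultimately show ?thesis by linarith
qed

end
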